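(* Let $p>3$ be a prime, let $G=\mathbb{Z}/p\mathbb{Z}$, and let $U=u_1u_2u_3$ and $V=v_1v_2v_3$ be sequences over $G$ each consisting of three distinct elements. Let $U\cdot V=\{\sum_{i=1}^3 u_i v_{\sigma(i)} : \sigma \text{ a permutation of } \{1,2,3\}\}\subseteq G$. Then $|U\cdot V|\geq 4$. Furthermore, if $p>7$ and $|U\cdot V|=4$, then $U\cdot V$ is not an arithmetic progression, and either both $\{u_1,u_2,u_3\}$ and $\{v_1,v_2,v_3\}$ are arithmetic progressions, or else there exist affine transformations $\varphi,\psi$ of $G$ (maps $z\mapsto \alpha z+\beta$ with $\alpha,\beta\in G$, $\alpha\neq 0$) such that $\varphi(\{u_1,u_2,u_3\})=\{0,1,x\}$ and $\psi(\{v_1,v_2,v_3\})=\{0,1,y\}$, where $x$ and $y$ are the two distinct roots of $z^2-z+1$ in $\mathbb{Z}/p\mathbb{Z}$.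
   Context: A subset $A\subseteq \mathbb{Z}/p\mathbb{Z}$ is an arithmetic progression if $A=\{a,a+d,\ldots,a+(k-1)d\}$ for some $a\in \mathbb{Z}/p\mathbb{Z}$, some nonzero $d$ (the difference), and $k=|A|$. Multiplication is that of the ring $\mathbb{Z}/p\mathbb{Z}$. *)

theory Defs
  imports "HOL-Combinatorics.Permutations" "HOL-Computational_Algebra.Primes"
begin

text \<open>Z/pZ is modelled by the integers 0..p-1 with arithmetic taken mod p.\<close>

definition residues_set :: "int \<Rightarrow> int set" where
  "residues_set p = {0..<p}"

definition seq_prod_set :: "int \<Rightarrow> (nat \<Rightarrow> int) \<Rightarrow> (nat \<Rightarrow> int) \<Rightarrow> int set" where
  "seq_prod_set p u v =
     {(\<Sum>i\<in>{1,2,3}. u i * v (\<sigma> i)) mod p | \<sigma>. \<sigma> permutes {1,2,3::nat}}"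

definition is_AP_mod :: "int \<Rightarrow> int set \<Rightarrow> bool" where
  "is_AP_mod p A \<longleftrightarrow> (\<exists>a d. d mod p \<noteq> 0 \<and> A = {(a + int i * d) mod p | i. i < card A})"

definition affine_mod :: "int \<Rightarrow> int \<Rightarrow> int \<Rightarrow> int \<Rightarrow> int" where
  "affine_mod p \<alpha> \<beta> z = (\<alpha> * z + \<beta>) mod p"

end

theory Submission
  imports Defs "HOL-Number_Theory.Cong"
begin

definition Qf :: "nat \<Rightarrow> int set \<Rightarrow> int" where
  "Qf k S = (\<Sum>s\<in>S. (4*s - (\<Sum>x\<in>S. x))^k)"

lemma card4_distinct:
  assumes "card {a,b,c,d::'a} = 4"
  shows "a \<noteq> b \<and> a \<noteq> c \<and> a \<noteq> d \<and> b \<noteq> c \<and> b \<noteq> d \<and> c \<noteq> d"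
proof -
  have "card {b,c,d} \<le> 3" "card {a,c,d} \<le> 3" "card {a,b,d} \<le> 3" "card {a,b,c} \<le> 3"
    by (auto intro: card_insert_le_m1 simp: card_insert_if)
  then show ?thesis using assms by (auto simp: insert_commute)
qed

lemma Qcong:
  fixes z1 z2 z3 z4 w1 w2 w3 w4 p :: int
  assumes "card {z1,z2,z3,z4} = 4" "[z1 = w1] (mod p)" "[z2 = w2] (mod p)" "[z3 = w3] (mod p)" "[z4 = w4] (mod p)"
  shows "[Qf k {z1,z2,z3,z4} = (4*w1 - (w1+w2+w3+w4))^k + (4*w2 - (w1+w2+w3+w4))^k
           + (4*w3 - (w1+w2+w3+w4))^k + (4*w4 - (w1+w2+w3+w4))^k] (mod p)"
proof -
  have d: "z1 \<noteq> z2 \<and> z1 \<noteq> z3 \<and> z1 \<noteq> z4 \<and> z2 \<noteq> z3 \<and> z2 \<noteq> z4 \<and> z3 \<noteq> z4"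
    using card4_distinct[OF assms(1)] .
  have s: "(\<Sum>x\<in>{z1,z2,z3,z4}. x) = z1+z2+z3+z4" using d by simp
  have q: "Qf k {z1,z2,z3,z4} = (4*z1 - (z1+z2+z3+z4))^k + (4*z2 - (z1+z2+z3+z4))^k
           + (4*z3 - (z1+z2+z3+z4))^k + (4*z4 - (z1+z2+z3+z4))^k"
    unfolding Qf_def s using d by (simp add: add.assoc)
  show ?thesis unfolding q
    apply (intro cong_add cong_pow cong_diff cong_mult)
    apply (simp_all add: assms)
    done
qed

lemma less4: "(i::nat) < 4 \<longleftrightarrow> i = 0 \<or> i = 1 \<or> i = 2 \<or> i = 3" by auto
lemma less3: "(i::nat) < 3 \<longleftrightarrow> i = 0 \<or> i = 1 \<or> i = 2" by auto

lemma AP_Q: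
  fixes p :: int and S :: "int set"
  assumes "is_AP_mod p S" "card S = 4"
  shows "\<exists>d. \<not> p dvd d \<and> [Qf 2 S = 80*d^2] (mod p) \<and> [Qf 4 S = 2624*d^4] (mod p)"
proof -
  obtain a d where d: "d mod p \<noteq> 0" and S: "S = {(a + int i * d) mod p | i. i < card S}"
    using assms(1) unfolding is_AP_mod_def by blast
  have S4: "S = {a mod p, (a+d) mod p, (a+2*d) mod p, (a+3*d) mod p}"
  proof -
    have l: "{..<4::nat} = {0,1,2,3}" by auto
    have "{(a + int i * d) mod p | i. i < 4} = (\<lambda>i. (a + int i * d) mod p) ` {..<4}" by blast
    also have "\<dots> = {a mod p, (a+d) mod p, (a+2*d) mod p, (a+3*d) mod p}" unfolding l by simp
    finally show ?thesis using S assms(2) by simp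
  qed
  have c: "card {a mod p, (a+d) mod p, (a+2*d) mod p, (a+3*d) mod p} = 4" using assms(2) S4 by simp
  have h: "[Qf k S = (4*a - (a+(a+d)+(a+2*d)+(a+3*d)))^k + (4*(a+d) - (a+(a+d)+(a+2*d)+(a+3*d)))^k
           + (4*(a+2*d) - (a+(a+d)+(a+2*d)+(a+3*d)))^k + (4*(a+3*d) - (a+(a+d)+(a+2*d)+(a+3*d)))^k] (mod p)" for k
    unfolding S4 by (rule Qcong[OF c]) (simp_all add: cong_def)
  have e2: "(4*a - (a+(a+d)+(a+2*d)+(a+3*d)))^2 + (4*(a+d) - (a+(a+d)+(a+2*d)+(a+3*d)))^2
           + (4*(a+2*d) - (a+(a+d)+(a+2*d)+(a+3*d)))^2 + (4*(a+3*d) - (a+(a+d)+(a+2*d)+(a+3*d)))^2 = 80*d^2"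
    by algebra
  have e4: "(4*a - (a+(a+d)+(a+2*d)+(a+3*d)))^4 + (4*(a+d) - (a+(a+d)+(a+2*d)+(a+3*d)))^4
           + (4*(a+2*d) - (a+(a+d)+(a+2*d)+(a+3*d)))^4 + (4*(a+3*d) - (a+(a+d)+(a+2*d)+(a+3*d)))^4 = 2624*d^4"
    by algebra
  have "\<not> p dvd d" using d by (simp add: dvd_eq_mod_eq_0)
  then show ?thesis using h[of 2] h[of 4] unfolding e2 e4 by blast
qed


definition hasmid :: "int \<Rightarrow> int \<Rightarrow> int \<Rightarrow> int \<Rightarrow> bool" where
  "hasmid p x y z \<longleftrightarrow> [2*x = y+z] (mod p) \<or> [2*y = x+z] (mod p) \<or> [2*z = x+y] (mod p)"

lemma dvd_eqI1: "(p::int) dvd x \<Longrightarrow> x = y \<Longrightarrow> p dvd y" by simp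
lemma dvd_eqI2: "(p::int) dvd x \<Longrightarrow> x = - y \<Longrightarrow> p dvd y" by simp

lemma hasmid_u:
  fixes p x y z :: int
  shows "p dvd (2*y - x - z) \<Longrightarrow> hasmid p x y z"
    "p dvd (2*x - y - z) \<Longrightarrow> hasmid p x y z"
    "p dvd (2*z - x - y) \<Longrightarrow> hasmid p x y z"
  unfolding hasmid_def cong_iff_dvd_diff by (simp_all add: diff_diff_add)

lemma hasmid_v:
  fixes p x y z :: int
  shows "p dvd ((x - y) - (z - x)) \<Longrightarrow> hasmid p x y z"
    "p dvd ((z - x) - (x - y)) \<Longrightarrow> hasmid p x y z"
    "p dvd ((x - y) - (y - z)) \<Longrightarrow> hasmid p x y z"
    "p dvd ((y - z) - (x - y)) \<Longrightarrow> hasmid p x y z"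
    "p dvd ((y - z) - (z - x)) \<Longrightarrow> hasmid p x y z"
    "p dvd ((z - x) - (y - z)) \<Longrightarrow> hasmid p x y z"
  unfolding hasmid_def cong_iff_dvd_diff
  subgoal by (rule disjI1, erule dvd_eqI1) algebra
  subgoal by (rule disjI1, erule dvd_eqI2) algebra
  subgoal by (rule disjI2, rule disjI1, erule dvd_eqI2) algebra
  subgoal by (rule disjI2, rule disjI1, erule dvd_eqI1) algebra
  subgoal by (rule disjI2, rule disjI2, erule dvd_eqI2) algebra
  subgoal by (rule disjI2, rule disjI2, erule dvd_eqI1) algebra
  done

lemma nz:
  fixes p a b :: int
  assumes "0 \<le> a" "a < p" "0 \<le> b" "b < p" "a \<noteq> b"
  shows "\<not> p dvd (a - b)"
proof
  assume "p dvd (a - b)"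
  then have "\<bar>p\<bar> \<le> \<bar>a - b\<bar>" using assms(5) by (intro dvd_imp_le_int) auto
  then show False using assms by auto
qed

lemma small_ndvd:
  fixes p n :: int
  assumes "0 < n" "n < p"
  shows "\<not> p dvd n"
  using assms zdvd_imp_le by fastforce

lemma pdvd_mult_iff: "prime (p::int) \<Longrightarrow> p dvd x * y \<longleftrightarrow> p dvd x \<or> p dvd y"
  by (simp add: prime_dvd_mult_iff)

lemma L_pair:
  fixes p ui uj g al be uk X Y :: int
  assumes "prime p" "\<not> p dvd (ui - uj)" "\<not> p dvd g" "al + be + g = 0"
    "p dvd X" "X = ui*al + uj*be + uk*g" "p dvd Y" "Y = - (ui*be + uj*al + uk*g)"
  shows "p dvd (al - be) \<and> p dvd (2*uk - ui - uj)"
proof -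
  have "X + Y = (ui - uj) * (al - be)" using assms(6,8) by algebra
  moreover have "p dvd (X + Y)" using assms(5,7) by simp
  ultimately have 1: "p dvd (al - be)" using assms(1,2) pdvd_mult_iff by metis
  have "X - Y = g * (2*uk - ui - uj)" using assms(4,6,8)
  proof -
    have "be = - al - g" using assms(4) by simp
    then show ?thesis using assms(6,8) by algebra
  qed
  moreover have "p dvd (X - Y)" using assms(5,7) by simp
  ultimately have 2: "p dvd (2*uk - ui - uj)" using assms(1,3) pdvd_mult_iff by metis
  show ?thesis using 1 2 by simp
qed

lemma F3:
  fixes p u1 u2 u3 v1 v2 v3 :: int
  assumes pr: "prime p" and nu: "\<not> p dvd (u1 - u2)" "\<not> p dvd (u1 - u3)" "\<not> p dvd (u2 - u3)"
    and nv: "\<not> p dvd (v1 - v2)" "\<not> p dvd (v3 - v1)" "\<not> p dvd (v2 - v3)"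
    and hX: "p dvd ((u1*v1+u2*v2+u3*v3) - (u1*v2+u2*v3+u3*v1)) \<or> p dvd ((u1*v2+u2*v3+u3*v1) - (u1*v3+u2*v1+u3*v2)) \<or> p dvd ((u1*v3+u2*v1+u3*v2) - (u1*v1+u2*v2+u3*v3))"
    and hY: "p dvd ((u1*v1+u2*v3+u3*v2) - (u1*v3+u2*v2+u3*v1)) \<or> p dvd ((u1*v3+u2*v2+u3*v1) - (u1*v2+u2*v1+u3*v3)) \<or> p dvd ((u1*v2+u2*v1+u3*v3) - (u1*v1+u2*v3+u3*v2))"
  shows "hasmid p u1 u2 u3 \<and> hasmid p v1 v2 v3"
proof -
  have c0: "hasmid p u1 u2 u3 \<and> hasmid p v1 v2 v3" if h1: "p dvd ((u1*v1+u2*v2+u3*v3) - (u1*v2+u2*v3+u3*v1))" and h2: "p dvd ((u1*v1+u2*v3+u3*v2) - (u1*v3+u2*v2+u3*v1))"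
  proof -
    have "p dvd ((v1 - v2) - (v3 - v1)) \<and> p dvd (2*u2 - u1 - u3)"
    proof (rule L_pair[of p u1 u3 "(v2 - v3)" "(v1 - v2)" "(v3 - v1)" "(u1*v1+u2*v2+u3*v3) - (u1*v2+u2*v3+u3*v1)" u2 "(u1*v1+u2*v3+u3*v2) - (u1*v3+u2*v2+u3*v1)"])
      show "(u1*v1+u2*v2+u3*v3) - (u1*v2+u2*v3+u3*v1) = u1*(v1 - v2) + u3*(v3 - v1) + u2*(v2 - v3)" by algebra
      show "(u1*v1+u2*v3+u3*v2) - (u1*v3+u2*v2+u3*v1) = - (u1*(v3 - v1) + u3*(v1 - v2) + u2*(v2 - v3))" by algebra
    qed (use pr nu nv h1 h2 in auto)
    then show ?thesis by (blast intro: hasmid_u hasmid_v)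
  qed
  have c1: "hasmid p u1 u2 u3 \<and> hasmid p v1 v2 v3" if h1: "p dvd ((u1*v1+u2*v2+u3*v3) - (u1*v2+u2*v3+u3*v1))" and h2: "p dvd ((u1*v3+u2*v2+u3*v1) - (u1*v2+u2*v1+u3*v3))"
  proof -
    have "p dvd ((v1 - v2) - (v2 - v3)) \<and> p dvd (2*u3 - u1 - u2)"
    proof (rule L_pair[of p u1 u2 "(v3 - v1)" "(v1 - v2)" "(v2 - v3)" "(u1*v1+u2*v2+u3*v3) - (u1*v2+u2*v3+u3*v1)" u3 "(u1*v3+u2*v2+u3*v1) - (u1*v2+u2*v1+u3*v3)"])
      show "(u1*v1+u2*v2+u3*v3) - (u1*v2+u2*v3+u3*v1) = u1*(v1 - v2) + u2*(v2 - v3) + u3*(v3 - v1)" by algebra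
      show "(u1*v3+u2*v2+u3*v1) - (u1*v2+u2*v1+u3*v3) = - (u1*(v2 - v3) + u2*(v1 - v2) + u3*(v3 - v1))" by algebra
    qed (use pr nu nv h1 h2 in auto)
    then show ?thesis by (blast intro: hasmid_u hasmid_v)
  qed
  have c2: "hasmid p u1 u2 u3 \<and> hasmid p v1 v2 v3" if h1: "p dvd ((u1*v1+u2*v2+u3*v3) - (u1*v2+u2*v3+u3*v1))" and h2: "p dvd ((u1*v2+u2*v1+u3*v3) - (u1*v1+u2*v3+u3*v2))"
  proof -
    have "p dvd ((v2 - v3) - (v3 - v1)) \<and> p dvd (2*u1 - u2 - u3)"
    proof (rule L_pair[of p u2 u3 "(v1 - v2)" "(v2 - v3)" "(v3 - v1)" "(u1*v1+u2*v2+u3*v3) - (u1*v2+u2*v3+u3*v1)" u1 "(u1*v2+u2*v1+u3*v3) - (u1*v1+u2*v3+u3*v2)"])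
      show "(u1*v1+u2*v2+u3*v3) - (u1*v2+u2*v3+u3*v1) = u2*(v2 - v3) + u3*(v3 - v1) + u1*(v1 - v2)" by algebra
      show "(u1*v2+u2*v1+u3*v3) - (u1*v1+u2*v3+u3*v2) = - (u2*(v3 - v1) + u3*(v2 - v3) + u1*(v1 - v2))" by algebra
    qed (use pr nu nv h1 h2 in auto)
    then show ?thesis by (blast intro: hasmid_u hasmid_v)
  qed
  have c3: "hasmid p u1 u2 u3 \<and> hasmid p v1 v2 v3" if h1: "p dvd ((u1*v2+u2*v3+u3*v1) - (u1*v3+u2*v1+u3*v2))" and h2: "p dvd ((u1*v1+u2*v3+u3*v2) - (u1*v3+u2*v2+u3*v1))"
  proof -
    have "p dvd ((v2 - v3) - (v3 - v1)) \<and> p dvd (2*u3 - u1 - u2)"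
    proof (rule L_pair[of p u1 u2 "(v1 - v2)" "(v2 - v3)" "(v3 - v1)" "(u1*v2+u2*v3+u3*v1) - (u1*v3+u2*v1+u3*v2)" u3 "(u1*v1+u2*v3+u3*v2) - (u1*v3+u2*v2+u3*v1)"])
      show "(u1*v2+u2*v3+u3*v1) - (u1*v3+u2*v1+u3*v2) = u1*(v2 - v3) + u2*(v3 - v1) + u3*(v1 - v2)" by algebra
      show "(u1*v1+u2*v3+u3*v2) - (u1*v3+u2*v2+u3*v1) = - (u1*(v3 - v1) + u2*(v2 - v3) + u3*(v1 - v2))" by algebra
    qed (use pr nu nv h1 h2 in auto)
    then show ?thesis by (blast intro: hasmid_u hasmid_v)
  qed
  have c4: "hasmid p u1 u2 u3 \<and> hasmid p v1 v2 v3" if h1: "p dvd ((u1*v2+u2*v3+u3*v1) - (u1*v3+u2*v1+u3*v2))" and h2: "p dvd ((u1*v3+u2*v2+u3*v1) - (u1*v2+u2*v1+u3*v3))"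
  proof -
    have "p dvd ((v3 - v1) - (v1 - v2)) \<and> p dvd (2*u1 - u2 - u3)"
    proof (rule L_pair[of p u2 u3 "(v2 - v3)" "(v3 - v1)" "(v1 - v2)" "(u1*v2+u2*v3+u3*v1) - (u1*v3+u2*v1+u3*v2)" u1 "(u1*v3+u2*v2+u3*v1) - (u1*v2+u2*v1+u3*v3)"])
      show "(u1*v2+u2*v3+u3*v1) - (u1*v3+u2*v1+u3*v2) = u2*(v3 - v1) + u3*(v1 - v2) + u1*(v2 - v3)" by algebra
      show "(u1*v3+u2*v2+u3*v1) - (u1*v2+u2*v1+u3*v3) = - (u2*(v1 - v2) + u3*(v3 - v1) + u1*(v2 - v3))" by algebra
    qed (use pr nu nv h1 h2 in auto)
    then show ?thesis by (blast intro: hasmid_u hasmid_v)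
  qed
  have c5: "hasmid p u1 u2 u3 \<and> hasmid p v1 v2 v3" if h1: "p dvd ((u1*v2+u2*v3+u3*v1) - (u1*v3+u2*v1+u3*v2))" and h2: "p dvd ((u1*v2+u2*v1+u3*v3) - (u1*v1+u2*v3+u3*v2))"
  proof -
    have "p dvd ((v2 - v3) - (v1 - v2)) \<and> p dvd (2*u2 - u1 - u3)"
    proof (rule L_pair[of p u1 u3 "(v3 - v1)" "(v2 - v3)" "(v1 - v2)" "(u1*v2+u2*v3+u3*v1) - (u1*v3+u2*v1+u3*v2)" u2 "(u1*v2+u2*v1+u3*v3) - (u1*v1+u2*v3+u3*v2)"])
      show "(u1*v2+u2*v3+u3*v1) - (u1*v3+u2*v1+u3*v2) = u1*(v2 - v3) + u3*(v1 - v2) + u2*(v3 - v1)" by algebra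
      show "(u1*v2+u2*v1+u3*v3) - (u1*v1+u2*v3+u3*v2) = - (u1*(v1 - v2) + u3*(v2 - v3) + u2*(v3 - v1))" by algebra
    qed (use pr nu nv h1 h2 in auto)
    then show ?thesis by (blast intro: hasmid_u hasmid_v)
  qed
  have c6: "hasmid p u1 u2 u3 \<and> hasmid p v1 v2 v3" if h1: "p dvd ((u1*v3+u2*v1+u3*v2) - (u1*v1+u2*v2+u3*v3))" and h2: "p dvd ((u1*v1+u2*v3+u3*v2) - (u1*v3+u2*v2+u3*v1))"
  proof -
    have "p dvd ((v1 - v2) - (v2 - v3)) \<and> p dvd (2*u1 - u2 - u3)"
    proof (rule L_pair[of p u2 u3 "(v3 - v1)" "(v1 - v2)" "(v2 - v3)" "(u1*v3+u2*v1+u3*v2) - (u1*v1+u2*v2+u3*v3)" u1 "(u1*v1+u2*v3+u3*v2) - (u1*v3+u2*v2+u3*v1)"])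
      show "(u1*v3+u2*v1+u3*v2) - (u1*v1+u2*v2+u3*v3) = u2*(v1 - v2) + u3*(v2 - v3) + u1*(v3 - v1)" by algebra
      show "(u1*v1+u2*v3+u3*v2) - (u1*v3+u2*v2+u3*v1) = - (u2*(v2 - v3) + u3*(v1 - v2) + u1*(v3 - v1))" by algebra
    qed (use pr nu nv h1 h2 in auto)
    then show ?thesis by (blast intro: hasmid_u hasmid_v)
  qed
  have c7: "hasmid p u1 u2 u3 \<and> hasmid p v1 v2 v3" if h1: "p dvd ((u1*v3+u2*v1+u3*v2) - (u1*v1+u2*v2+u3*v3))" and h2: "p dvd ((u1*v3+u2*v2+u3*v1) - (u1*v2+u2*v1+u3*v3))"
  proof -
    have "p dvd ((v3 - v1) - (v2 - v3)) \<and> p dvd (2*u2 - u1 - u3)"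
    proof (rule L_pair[of p u1 u3 "(v1 - v2)" "(v3 - v1)" "(v2 - v3)" "(u1*v3+u2*v1+u3*v2) - (u1*v1+u2*v2+u3*v3)" u2 "(u1*v3+u2*v2+u3*v1) - (u1*v2+u2*v1+u3*v3)"])
      show "(u1*v3+u2*v1+u3*v2) - (u1*v1+u2*v2+u3*v3) = u1*(v3 - v1) + u3*(v2 - v3) + u2*(v1 - v2)" by algebra
      show "(u1*v3+u2*v2+u3*v1) - (u1*v2+u2*v1+u3*v3) = - (u1*(v2 - v3) + u3*(v3 - v1) + u2*(v1 - v2))" by algebra
    qed (use pr nu nv h1 h2 in auto)
    then show ?thesis by (blast intro: hasmid_u hasmid_v)
  qed
  have c8: "hasmid p u1 u2 u3 \<and> hasmid p v1 v2 v3" if h1: "p dvd ((u1*v3+u2*v1+u3*v2) - (u1*v1+u2*v2+u3*v3))" and h2: "p dvd ((u1*v2+u2*v1+u3*v3) - (u1*v1+u2*v3+u3*v2))"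
  proof -
    have "p dvd ((v3 - v1) - (v1 - v2)) \<and> p dvd (2*u3 - u1 - u2)"
    proof (rule L_pair[of p u1 u2 "(v2 - v3)" "(v3 - v1)" "(v1 - v2)" "(u1*v3+u2*v1+u3*v2) - (u1*v1+u2*v2+u3*v3)" u3 "(u1*v2+u2*v1+u3*v3) - (u1*v1+u2*v3+u3*v2)"])
      show "(u1*v3+u2*v1+u3*v2) - (u1*v1+u2*v2+u3*v3) = u1*(v3 - v1) + u2*(v1 - v2) + u3*(v2 - v3)" by algebra
      show "(u1*v2+u2*v1+u3*v3) - (u1*v1+u2*v3+u3*v2) = - (u1*(v1 - v2) + u2*(v3 - v1) + u3*(v2 - v3))" by algebra
    qed (use pr nu nv h1 h2 in auto)
    then show ?thesis by (blast intro: hasmid_u hasmid_v)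
  qed
  show ?thesis using hX hY c0 c1 c2 c3 c4 c5 c6 c7 c8 by blast
qed

definition S6 :: "int \<Rightarrow> int \<Rightarrow> int \<Rightarrow> int \<Rightarrow> int \<Rightarrow> int \<Rightarrow> int \<Rightarrow> int set" where
  "S6 p u1 u2 u3 v1 v2 v3 = {(u1*v1+u2*v2+u3*v3) mod p, (u1*v2+u2*v3+u3*v1) mod p,
     (u1*v3+u2*v1+u3*v2) mod p, (u1*v1+u2*v3+u3*v2) mod p,
     (u1*v3+u2*v2+u3*v1) mod p, (u1*v2+u2*v1+u3*v3) mod p}"

definition good :: "int \<Rightarrow> int \<Rightarrow> int \<Rightarrow> int \<Rightarrow> bool" where
  "good p x y z \<longleftrightarrow> 0 \<le> x \<and> x < p \<and> 0 \<le> y \<and> y < p \<and> 0 \<le> z \<and> z < p \<and> x \<noteq> y \<and> x \<noteq> z \<and> y \<noteq> z"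

lemma good_nz:
  assumes "good p x y z"
  shows "\<not> p dvd (x - y)" "\<not> p dvd (y - x)" "\<not> p dvd (x - z)" "\<not> p dvd (z - x)"
    "\<not> p dvd (y - z)" "\<not> p dvd (z - y)"
  using assms unfolding good_def by (auto dest: nz)

lemma good_perm:
  "good p x y z \<Longrightarrow> good p y x z" "good p x y z \<Longrightarrow> good p x z y"
  unfolding good_def by auto

lemma no3: "prime (p::int) \<Longrightarrow> p > 3 \<Longrightarrow> p dvd 3 * w^2 \<Longrightarrow> \<not> p dvd w \<Longrightarrow> False"
  using small_ndvd[of 3 p] by (auto simp: prime_dvd_mult_iff prime_dvd_power_iff)

lemma no80: "prime (p::int) \<Longrightarrow> p > 7 \<Longrightarrow> p dvd 80 * w \<Longrightarrow> \<not> p dvd w \<Longrightarrow> False"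
proof -
  assume a: "prime p" "p > 7" "p dvd 80 * w" "\<not> p dvd w"
  have e: "(80::int) * w = 2^4 * (5 * w)" by simp
  have "p dvd 2^4 * (5 * w)" using a(3) unfolding e .
  then have "p dvd 2^4 \<or> p dvd 5 * w" using a(1) prime_dvd_mult_iff by blast
  then have "p dvd 2 \<or> p dvd 5 \<or> p dvd w" using a(1) prime_dvd_mult_iff prime_dvd_power[of p 2 4] by metis
  then show False using small_ndvd[of 2 p] small_ndvd[of 5 p] a(2,4) by auto
qed

lemma noBig: "prime (p::int) \<Longrightarrow> p > 7 \<Longrightarrow> p dvd 11468800 * w \<Longrightarrow> \<not> p dvd w \<Longrightarrow> False"
proof -
  assume a: "prime p" "p > 7" "p dvd 11468800 * w" "\<not> p dvd w"
  have e: "(11468800::int) * w = 2^16 * (5^2 * (7 * w))" by simp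
  have "p dvd 2^16 * (5^2 * (7 * w))" using a(3) unfolding e .
  then have "p dvd 2^16 \<or> p dvd 5^2 \<or> p dvd 7 \<or> p dvd w" using a(1) prime_dvd_mult_iff by metis
  then have "p dvd 2 \<or> p dvd 5 \<or> p dvd 7 \<or> p dvd w" using a(1) prime_dvd_power[of p 2 16] prime_dvd_power[of p 5 2] by metis
  then show False using small_ndvd[of 2 p] small_ndvd[of 5 p] small_ndvd[of 7 p] a(2,4) by auto
qed

lemma nomid:
  fixes p v1 v2 v3 :: int
  assumes pr: "prime p" and p3: "p > 3" and n1: "\<not> p dvd (v1 - v2)" and n2: "\<not> p dvd (v2 - v3)"
    and N: "p dvd ((v1-v2)^2 + (v1-v2)*(v2-v3) + (v2-v3)^2)" and h: "hasmid p v1 v2 v3"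
  shows False
proof -
  have c1: "p dvd (2*v1 - (v2+v3)) \<or> p dvd (2*v2 - (v1+v3)) \<or> p dvd (2*v3 - (v1+v2))"
    using h unfolding hasmid_def cong_iff_dvd_diff .
  show False
  proof (cases "p dvd (2*v3 - (v1+v2))")
    case True
    have "3*(v2-v3)^2 = ((v1-v2)^2 + (v1-v2)*(v2-v3) + (v2-v3)^2) + ((v1-v2)-(v2-v3))*(2*v3 - (v1+v2))"
      by algebra
    then have "p dvd 3*(v2-v3)^2" using N True by (metis dvd_add dvd_mult)
    then show False using no3 pr p3 n2 by blast
  next
    case False
    then have t: "p dvd (2*v1 - (v2+v3)) \<or> p dvd (2*v2 - (v1+v3))" using c1 by blast
    have e1: "3*(v1-v2)^2 = ((v1-v2)^2 + (v1-v2)*(v2-v3) + (v2-v3)^2) - ((v2-v3)-(v1-v2))*(2*v1 - (v2+v3))"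
      by algebra
    have e2: "3*(v1-v2)^2 = ((v1-v2)^2 + (v1-v2)*(v2-v3) + (v2-v3)^2) - (2*v2 - (v1+v3))*((v2-v3)+2*(v1-v2))"
      by algebra
    have "p dvd 3*(v1-v2)^2" using t
    proof
      assume "p dvd (2*v1 - (v2+v3))" then show ?thesis using N e1 by (metis dvd_diff dvd_mult)
    next
      assume "p dvd (2*v2 - (v1+v3))" then show ?thesis using N e2 by (metis dvd_diff dvd_mult2)
    qed
    then show False using no3 pr p3 n1 by blast
  qed
qed

lemma allA_N:
  fixes p u1 u2 u3 v1 v2 v3 :: int
  assumes pr: "prime p" and gu: "good p u1 u2 u3" and gv: "good p v1 v2 v3"
    and h1: "p dvd ((u1*v1+u2*v2+u3*v3) - (u1*v2+u2*v3+u3*v1))"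
    and h2: "p dvd ((u1*v2+u2*v3+u3*v1) - (u1*v3+u2*v1+u3*v2))"
  shows "p dvd ((u1-u3)^2 - (u1-u3)*(u2-u3) + (u2-u3)^2)"
    "p dvd ((v1-v2)^2 + (v1-v2)*(v2-v3) + (v2-v3)^2)"
proof -
  let ?X1 = "(u1*v1+u2*v2+u3*v3) - (u1*v2+u2*v3+u3*v1)"
  let ?X2 = "(u1*v2+u2*v3+u3*v1) - (u1*v3+u2*v1+u3*v2)"
  have e1: "(u1-u3)*?X2 + (u2-u3)*?X1 = (v2-v3) * ((u1-u3)^2 - (u1-u3)*(u2-u3) + (u2-u3)^2)"
    by algebra
  have e2: "((v1-v2)+(v2-v3))*?X1 + (v2-v3)*?X2 = (u1-u3) * ((v1-v2)^2 + (v1-v2)*(v2-v3) + (v2-v3)^2)"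
    by algebra
  have "p dvd (v2-v3) * ((u1-u3)^2 - (u1-u3)*(u2-u3) + (u2-u3)^2)"
    unfolding e1[symmetric] using h1 h2 by simp
  then show "p dvd ((u1-u3)^2 - (u1-u3)*(u2-u3) + (u2-u3)^2)"
    using pr good_nz[OF gv] by (simp add: prime_dvd_mult_iff)
  have "p dvd (u1-u3) * ((v1-v2)^2 + (v1-v2)*(v2-v3) + (v2-v3)^2)"
    unfolding e2[symmetric] using h1 h2 by simp
  then show "p dvd ((v1-v2)^2 + (v1-v2)*(v2-v3) + (v2-v3)^2)"
    using pr good_nz[OF gu] by (simp add: prime_dvd_mult_iff)
qed

lemma allA_Bdist:
  fixes p u1 u2 u3 v1 v2 v3 :: int
  assumes pr: "prime p" and p3: "p > 3" and gu: "good p u1 u2 u3" and gv: "good p v1 v2 v3"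
    and h1: "p dvd ((u1*v1+u2*v2+u3*v3) - (u1*v2+u2*v3+u3*v1))"
    and h2: "p dvd ((u1*v2+u2*v3+u3*v1) - (u1*v3+u2*v1+u3*v2))"
  shows "\<not> (p dvd ((u1*v1+u2*v3+u3*v2) - (u1*v3+u2*v2+u3*v1)) \<or> p dvd ((u1*v3+u2*v2+u3*v1) - (u1*v2+u2*v1+u3*v3)) \<or> p dvd ((u1*v2+u2*v1+u3*v3) - (u1*v1+u2*v3+u3*v2)))"
proof
  assume hY: "p dvd ((u1*v1+u2*v3+u3*v2) - (u1*v3+u2*v2+u3*v1)) \<or> p dvd ((u1*v3+u2*v2+u3*v1) - (u1*v2+u2*v1+u3*v3)) \<or> p dvd ((u1*v2+u2*v1+u3*v3) - (u1*v1+u2*v3+u3*v2))"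
  have "hasmid p v1 v2 v3"
    using F3[OF pr good_nz(1,3,5)[OF gu] good_nz(1,4,5)[OF gv] _ hY] h1 by blast
  then show False using nomid[OF pr p3 good_nz(1,5)[OF gv] allA_N(2)[OF pr gu gv h1 h2]] by blast
qed

lemma modeq: "((x::int) mod p = y mod p) \<longleftrightarrow> p dvd (x - y)"
  by (simp add: cong_def[symmetric] cong_iff_dvd_diff)

lemma affine_to:
  fixes p e1 e2 e3 :: int
  assumes pr: "prime p" and ns: "\<not> p dvd (e2 - e3)"
    and N: "p dvd ((e1-e3)^2 - (e1-e3)*(e2-e3) + (e2-e3)^2)"
  obtains \<alpha> \<beta> x where "\<alpha> mod p \<noteq> 0" "x \<in> residues_set p" "(x^2 - x + 1) mod p = 0"
     "affine_mod p \<alpha> \<beta> e3 = 0" "affine_mod p \<alpha> \<beta> e2 = 1" "affine_mod p \<alpha> \<beta> e1 = x"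
     "[x = \<alpha>*(e1-e3)] (mod p)" "[\<alpha>*(e2-e3) = 1] (mod p)"
proof -
  have p1: "p > 1" using pr by (rule prime_gt_1_int)
  have "coprime p (e2 - e3)" by (rule prime_imp_coprime[OF pr ns])
  then have "coprime (e2 - e3) p" by (simp add: coprime_commute)
  then obtain \<alpha> where ha: "[(e2-e3)*\<alpha> = 1] (mod p)" using cong_solve_coprime_int by blast
  then have ha': "[\<alpha>*(e2-e3) = 1] (mod p)" by (simp add: mult.commute)
  define x where "x = (\<alpha>*(e1-e3)) mod p"
  define \<beta> where "\<beta> = - \<alpha> * e3"
  have f3: "affine_mod p \<alpha> \<beta> e3 = 0" unfolding affine_mod_def \<beta>_def by simp
  have f2: "affine_mod p \<alpha> \<beta> e2 = 1"
  proof -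
    have "affine_mod p \<alpha> \<beta> e2 = (\<alpha>*(e2-e3)) mod p" unfolding affine_mod_def \<beta>_def
      by (simp add: algebra_simps)
    also have "\<dots> = 1 mod p" using ha' by (simp add: cong_def)
    also have "\<dots> = 1" using p1 by simp
    finally show ?thesis .
  qed
  have f1: "affine_mod p \<alpha> \<beta> e1 = x" unfolding affine_mod_def \<beta>_def x_def
    by (simp add: algebra_simps)
  have an: "\<alpha> mod p \<noteq> 0"
  proof
    assume "\<alpha> mod p = 0"
    then have "p dvd \<alpha>" by (simp add: dvd_eq_mod_eq_0)
    then have "p dvd \<alpha>*(e2-e3)" by simp
    then have "p dvd 1" using cong_dvd_iff[OF ha'] by simp
    then show False using pr not_prime_unit by blast
  qed
  have xr: "x \<in> residues_set p" unfolding residues_set_def x_def using p1 by simp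
  have cx: "[x = \<alpha>*(e1-e3)] (mod p)" unfolding x_def by simp
  have C: "[x^2 - x + 1 = (\<alpha>*(e1-e3))^2 - \<alpha>*(e1-e3) + 1] (mod p)"
    apply (intro cong_add cong_diff cong_pow)
    apply (simp_all add: cx)
    done
  have E: "(\<alpha>*(e1-e3))^2 - \<alpha>*(e1-e3) + 1 = \<alpha>^2 * ((e1-e3)^2 - (e1-e3)*(e2-e3) + (e2-e3)^2)
      + (1 - \<alpha>*(e2-e3)) * (1 + \<alpha>*(e2-e3) - \<alpha>*(e1-e3))"
    by algebra
  have D: "p dvd (1 - \<alpha>*(e2-e3))" using ha' by (simp add: cong_iff_dvd_diff dvd_diff_commute)
  have "p dvd (\<alpha>*(e1-e3))^2 - \<alpha>*(e1-e3) + 1"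
    unfolding E by (rule dvd_add[OF dvd_mult[OF N] dvd_mult2[OF D]])
  then have "p dvd (x^2 - x + 1)" using cong_dvd_iff[OF C] by simp
  then have xq: "(x^2 - x + 1) mod p = 0" by (simp add: dvd_eq_mod_eq_0)
  show ?thesis by (rule that[OF an xr xq f3 f2 f1 cx ha'])
qed

lemma three_bad: "prime (p::int) \<Longrightarrow> p > 3 \<Longrightarrow> p dvd (x^2 - x + 1) \<Longrightarrow> p dvd (x*x - 1) \<Longrightarrow> False"
proof -
  assume a: "prime p" "p > 3" "p dvd (x^2 - x + 1)" "p dvd (x*x - 1)"
  have "3 = (x^2 - x + 1)*(x+2) - (x+1)*(x*x - 1)" by algebra
  then have "p dvd 3" using a(3,4) by (metis dvd_diff dvd_mult2 dvd_mult)
  then show False using small_ndvd[of 3 p] a(2) by simp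
qed

lemma allA_aff:
  fixes p u1 u2 u3 v1 v2 v3 :: int
  assumes pr: "prime p" and p3: "p > 3" and gu: "good p u1 u2 u3" and gv: "good p v1 v2 v3"
    and h1: "p dvd ((u1*v1+u2*v2+u3*v3) - (u1*v2+u2*v3+u3*v1))"
    and h2: "p dvd ((u1*v2+u2*v3+u3*v1) - (u1*v3+u2*v1+u3*v2))"
  shows "\<exists>\<alpha> \<beta> \<gamma> \<delta> x y.
          \<alpha> mod p \<noteq> 0 \<and> \<gamma> mod p \<noteq> 0 \<and>
          x \<in> residues_set p \<and> y \<in> residues_set p \<and> x \<noteq> y \<and>
          (x^2 - x + 1) mod p = 0 \<and> (y^2 - y + 1) mod p = 0 \<and>
          affine_mod p \<alpha> \<beta> ` {u1, u2, u3} = {0, 1, x} \<and>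
          affine_mod p \<gamma> \<delta> ` {v1, v2, v3} = {0, 1, y}"
proof -
  have Nu: "p dvd ((u1-u3)^2 - (u1-u3)*(u2-u3) + (u2-u3)^2)" by (rule allA_N(1)[OF pr gu gv h1 h2])
  have Nv0: "p dvd ((v1-v2)^2 + (v1-v2)*(v2-v3) + (v2-v3)^2)" by (rule allA_N(2)[OF pr gu gv h1 h2])
  have e1: "(v1-v3)^2 - (v1-v3)*(v2-v3) + (v2-v3)^2 = (v1-v2)^2 + (v1-v2)*(v2-v3) + (v2-v3)^2" by algebra
  have e2: "(v2-v3)^2 - (v2-v3)*(v1-v3) + (v1-v3)^2 = (v1-v2)^2 + (v1-v2)*(v2-v3) + (v2-v3)^2" by algebra
  have Nv1: "p dvd ((v1-v3)^2 - (v1-v3)*(v2-v3) + (v2-v3)^2)" using Nv0 unfolding e1 .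
  have Nv2: "p dvd ((v2-v3)^2 - (v2-v3)*(v1-v3) + (v1-v3)^2)" using Nv0 unfolding e2 .
  obtain \<alpha> \<beta> x where X: "\<alpha> mod p \<noteq> 0" "x \<in> residues_set p" "(x^2 - x + 1) mod p = 0"
     "affine_mod p \<alpha> \<beta> u3 = 0" "affine_mod p \<alpha> \<beta> u2 = 1" "affine_mod p \<alpha> \<beta> u1 = x"
     "[x = \<alpha>*(u1-u3)] (mod p)" "[\<alpha>*(u2-u3) = 1] (mod p)"
    by (rule affine_to[OF pr good_nz(5)[OF gu] Nu])
  obtain \<gamma> \<delta> y where Y: "\<gamma> mod p \<noteq> 0" "y \<in> residues_set p" "(y^2 - y + 1) mod p = 0"
     "affine_mod p \<gamma> \<delta> v3 = 0" "affine_mod p \<gamma> \<delta> v2 = 1" "affine_mod p \<gamma> \<delta> v1 = y"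
     "[y = \<gamma>*(v1-v3)] (mod p)" "[\<gamma>*(v2-v3) = 1] (mod p)"
    by (rule affine_to[OF pr good_nz(5)[OF gv] Nv1])
  obtain \<gamma>' \<delta>' y' where Y': "\<gamma>' mod p \<noteq> 0" "y' \<in> residues_set p" "(y'^2 - y' + 1) mod p = 0"
     "affine_mod p \<gamma>' \<delta>' v3 = 0" "affine_mod p \<gamma>' \<delta>' v1 = 1" "affine_mod p \<gamma>' \<delta>' v2 = y'"
     "[y' = \<gamma>'*(v2-v3)] (mod p)" "[\<gamma>'*(v1-v3) = 1] (mod p)"
    by (rule affine_to[OF pr good_nz(3)[OF gv] Nv2])
  have imu: "affine_mod p \<alpha> \<beta> ` {u1, u2, u3} = {0, 1, x}" using X by auto
  show ?thesis
  proof (cases "x = y")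
    case False
    note ne = False
    have imv: "affine_mod p \<gamma> \<delta> ` {v1, v2, v3} = {0, 1, y}" using Y by auto
    show ?thesis
      by (intro exI[of _ \<alpha>] exI[of _ \<beta>] exI[of _ \<gamma>] exI[of _ \<delta>] exI[of _ x] exI[of _ y]
          conjI X(1) Y(1) X(2) Y(2) ne X(3) Y(3) imu imv)
  next
    case True
    have "x \<noteq> y'"
    proof
      assume xy': "x = y'"
      have c0: "[y*y' = (\<gamma>*(v1-v3))*(\<gamma>'*(v2-v3))] (mod p)" by (rule cong_mult[OF Y(7) Y'(7)])
      have eq: "(\<gamma>*(v1-v3))*(\<gamma>'*(v2-v3)) = (\<gamma>*(v2-v3))*(\<gamma>'*(v1-v3))" by algebra
      have c2: "[(\<gamma>*(v2-v3))*(\<gamma>'*(v1-v3)) = 1*1] (mod p)" by (rule cong_mult[OF Y(8) Y'(8)])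
      have "[y*y' = 1*1] (mod p)" using cong_trans[OF c0[unfolded eq] c2] .
      then have "[x*x = 1] (mod p)" using True xy' by simp
      then have "p dvd (x*x - 1)" by (simp add: cong_iff_dvd_diff)
      moreover have "p dvd (x^2 - x + 1)" using X(3) by (simp add: dvd_eq_mod_eq_0)
      ultimately show False using three_bad pr p3 by blast
    qed
    note ne = this
    have imv: "affine_mod p \<gamma>' \<delta>' ` {v1, v2, v3} = {0, 1, y'}" using Y' by auto
    show ?thesis
      by (intro exI[of _ \<alpha>] exI[of _ \<beta>] exI[of _ \<gamma>'] exI[of _ \<delta>'] exI[of _ x] exI[of _ y']
          conjI X(1) Y'(1) X(2) Y'(2) ne X(3) Y'(3) imu imv)
  qed
qed

lemma S6_4:
  fixes p a1 a2 a3 b1 b2 b3 :: int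
  assumes "card {a1 mod p, b1 mod p, b2 mod p, b3 mod p} = 4"
  shows "[Qf k {a1 mod p, b1 mod p, b2 mod p, b3 mod p} = (4*a1 - (a1+b1+b2+b3))^k + (4*b1 - (a1+b1+b2+b3))^k
           + (4*b2 - (a1+b1+b2+b3))^k + (4*b3 - (a1+b1+b2+b3))^k] (mod p)"
  by (rule Qcong[OF assms]) simp_all

lemma gen_sq:
  fixes a b1 b2 b3 :: int
  shows "(4*a - (a+b1+b2+b3))^2 + (4*b1 - (a+b1+b2+b3))^2 + (4*b2 - (a+b1+b2+b3))^2 + (4*b3 - (a+b1+b2+b3))^2
    = 16*((b1-a)^2+(b2-a)^2+(b3-a)^2) - 4*((b1-a)+(b2-a)+(b3-a))^2"
  by algebra

lemma gen_S:
  fixes x1 x2 a b :: int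
  shows "(x2*b)^2 + (x1*(a+b))^2 + ((x1-x2)*a)^2 = (x1*a + x2*b)*(x1*(a+b) - x2*a) + (x1^2 - x1*x2 + x2^2)*(a^2+a*b+b^2)"
  by algebra

lemma allA_nAP:
  fixes p u1 u2 u3 v1 v2 v3 :: int
  assumes pr: "prime p" and p7: "p > 7" and gu: "good p u1 u2 u3" and gv: "good p v1 v2 v3"
    and h1: "p dvd ((u1*v1+u2*v2+u3*v3) - (u1*v2+u2*v3+u3*v1))"
    and h2: "p dvd ((u1*v2+u2*v3+u3*v1) - (u1*v3+u2*v1+u3*v2))"
    and c4: "card (S6 p u1 u2 u3 v1 v2 v3) = 4"
  shows "\<not> is_AP_mod p (S6 p u1 u2 u3 v1 v2 v3)"
proof
  assume ap: "is_AP_mod p (S6 p u1 u2 u3 v1 v2 v3)"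
  have m1: "(u1*v2+u2*v3+u3*v1) mod p = (u1*v1+u2*v2+u3*v3) mod p" using h1 by (simp add: modeq dvd_diff_commute)
  have m2: "(u1*v3+u2*v1+u3*v2) mod p = (u1*v1+u2*v2+u3*v3) mod p"
  proof -
    have "p dvd ((u1*v1+u2*v2+u3*v3) - (u1*v3+u2*v1+u3*v2))"
    proof -
      have e: "(u1*v1+u2*v2+u3*v3) - (u1*v3+u2*v1+u3*v2) = ((u1*v1+u2*v2+u3*v3) - (u1*v2+u2*v3+u3*v1)) + ((u1*v2+u2*v3+u3*v1) - (u1*v3+u2*v1+u3*v2))" by simp
      show ?thesis unfolding e by (rule dvd_add[OF h1 h2])
    qed
    then show ?thesis by (simp add: modeq dvd_diff_commute)
  qed
  have S: "S6 p u1 u2 u3 v1 v2 v3 = {(u1*v1+u2*v2+u3*v3) mod p, (u1*v1+u2*v3+u3*v2) mod p,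
     (u1*v3+u2*v2+u3*v1) mod p, (u1*v2+u2*v1+u3*v3) mod p}"
    unfolding S6_def m1 m2 by simp
  have c: "card {(u1*v1+u2*v2+u3*v3) mod p, (u1*v1+u2*v3+u3*v2) mod p,
     (u1*v3+u2*v2+u3*v1) mod p, (u1*v2+u2*v1+u3*v3) mod p} = 4" using c4 S by simp
  obtain d where d: "\<not> p dvd d" "[Qf 2 (S6 p u1 u2 u3 v1 v2 v3) = 80*d^2] (mod p)"
    using AP_Q[OF ap c4] by blast
  have q: "[Qf 2 (S6 p u1 u2 u3 v1 v2 v3) = (4*(u1*v1+u2*v2+u3*v3) - ((u1*v1+u2*v2+u3*v3)+(u1*v1+u2*v3+u3*v2)+(u1*v3+u2*v2+u3*v1)+(u1*v2+u2*v1+u3*v3)))^2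
     + (4*(u1*v1+u2*v3+u3*v2) - ((u1*v1+u2*v2+u3*v3)+(u1*v1+u2*v3+u3*v2)+(u1*v3+u2*v2+u3*v1)+(u1*v2+u2*v1+u3*v3)))^2
     + (4*(u1*v3+u2*v2+u3*v1) - ((u1*v1+u2*v2+u3*v3)+(u1*v1+u2*v3+u3*v2)+(u1*v3+u2*v2+u3*v1)+(u1*v2+u2*v1+u3*v3)))^2
     + (4*(u1*v2+u2*v1+u3*v3) - ((u1*v1+u2*v2+u3*v3)+(u1*v1+u2*v3+u3*v2)+(u1*v3+u2*v2+u3*v1)+(u1*v2+u2*v1+u3*v3)))^2] (mod p)"
    unfolding S by (rule S6_4[OF c])
  have Nu: "p dvd ((u1-u3)^2 - (u1-u3)*(u2-u3) + (u2-u3)^2)" by (rule allA_N(1)[OF pr gu gv h1 h2])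
  have q1: "(4*(u1*v1+u2*v2+u3*v3) - ((u1*v1+u2*v2+u3*v3)+(u1*v1+u2*v3+u3*v2)+(u1*v3+u2*v2+u3*v1)+(u1*v2+u2*v1+u3*v3)))^2
     + (4*(u1*v1+u2*v3+u3*v2) - ((u1*v1+u2*v2+u3*v3)+(u1*v1+u2*v3+u3*v2)+(u1*v3+u2*v2+u3*v1)+(u1*v2+u2*v1+u3*v3)))^2
     + (4*(u1*v3+u2*v2+u3*v1) - ((u1*v1+u2*v2+u3*v3)+(u1*v1+u2*v3+u3*v2)+(u1*v3+u2*v2+u3*v1)+(u1*v2+u2*v1+u3*v3)))^2
     + (4*(u1*v2+u2*v1+u3*v3) - ((u1*v1+u2*v2+u3*v3)+(u1*v1+u2*v3+u3*v2)+(u1*v3+u2*v2+u3*v1)+(u1*v2+u2*v1+u3*v3)))^2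
     = 16*(((u1*v1+u2*v3+u3*v2) - (u1*v1+u2*v2+u3*v3))^2 + ((u1*v3+u2*v2+u3*v1) - (u1*v1+u2*v2+u3*v3))^2 + ((u1*v2+u2*v1+u3*v3) - (u1*v1+u2*v2+u3*v3))^2)
       - 4*(((u1*v1+u2*v3+u3*v2) - (u1*v1+u2*v2+u3*v3)) + ((u1*v3+u2*v2+u3*v1) - (u1*v1+u2*v2+u3*v3)) + ((u1*v2+u2*v1+u3*v3) - (u1*v1+u2*v2+u3*v3)))^2"
    by (rule gen_sq)
  have d1: "(u1*v1+u2*v3+u3*v2) - (u1*v1+u2*v2+u3*v3) = - ((u2-u3)*(v2-v3))" by (simp add: algebra_simps)
  have d2: "(u1*v3+u2*v2+u3*v1) - (u1*v1+u2*v2+u3*v3) = - ((u1-u3)*((v1-v2)+(v2-v3)))" by (simp add: algebra_simps)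
  have d3: "(u1*v2+u2*v1+u3*v3) - (u1*v1+u2*v2+u3*v3) = - (((u1-u3)-(u2-u3))*(v1-v2))" by (simp add: algebra_simps)
  have s: "((u1*v1+u2*v3+u3*v2) - (u1*v1+u2*v2+u3*v3))^2 + ((u1*v3+u2*v2+u3*v1) - (u1*v1+u2*v2+u3*v3))^2 + ((u1*v2+u2*v1+u3*v3) - (u1*v1+u2*v2+u3*v3))^2
      = ((u1-u3)*(v1-v2) + (u2-u3)*(v2-v3)) * ((u1-u3)*((v1-v2)+(v2-v3)) - (u2-u3)*(v1-v2))
        + ((u1-u3)^2 - (u1-u3)*(u2-u3) + (u2-u3)^2) * ((v1-v2)^2 + (v1-v2)*(v2-v3) + (v2-v3)^2)"
  proof -
    have "((u1*v1+u2*v3+u3*v2) - (u1*v1+u2*v2+u3*v3))^2 + ((u1*v3+u2*v2+u3*v1) - (u1*v1+u2*v2+u3*v3))^2 + ((u1*v2+u2*v1+u3*v3) - (u1*v1+u2*v2+u3*v3))^2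
      = ((u2-u3)*(v2-v3))^2 + ((u1-u3)*((v1-v2)+(v2-v3)))^2 + (((u1-u3)-(u2-u3))*(v1-v2))^2"
      by (simp only: d1 d2 d3 power2_minus)
    also have "\<dots> = ((u1-u3)*(v1-v2) + (u2-u3)*(v2-v3)) * ((u1-u3)*((v1-v2)+(v2-v3)) - (u2-u3)*(v1-v2))
        + ((u1-u3)^2 - (u1-u3)*(u2-u3) + (u2-u3)^2) * ((v1-v2)^2 + (v1-v2)*(v2-v3) + (v2-v3)^2)"
      by (rule gen_S)
    finally show ?thesis .
  qed
  have x1: "(u1-u3)*(v1-v2) + (u2-u3)*(v2-v3) = (u1*v1+u2*v2+u3*v3) - (u1*v2+u2*v3+u3*v1)" by (simp add: algebra_simps)
  have r: "((u1*v1+u2*v3+u3*v2) - (u1*v1+u2*v2+u3*v3)) + ((u1*v3+u2*v2+u3*v1) - (u1*v1+u2*v2+u3*v3)) + ((u1*v2+u2*v1+u3*v3) - (u1*v1+u2*v2+u3*v3))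
     = - (2*((u1*v1+u2*v2+u3*v3) - (u1*v2+u2*v3+u3*v1)) + ((u1*v2+u2*v3+u3*v1) - (u1*v3+u2*v1+u3*v2)))" by (simp add: algebra_simps)
  have pS: "p dvd (((u1*v1+u2*v3+u3*v2) - (u1*v1+u2*v2+u3*v3))^2 + ((u1*v3+u2*v2+u3*v1) - (u1*v1+u2*v2+u3*v3))^2 + ((u1*v2+u2*v1+u3*v3) - (u1*v1+u2*v2+u3*v3))^2)"
    unfolding s x1 by (rule dvd_add[OF dvd_mult2[OF h1] dvd_mult2[OF Nu]])
  have pR: "p dvd (((u1*v1+u2*v3+u3*v2) - (u1*v1+u2*v2+u3*v3)) + ((u1*v3+u2*v2+u3*v1) - (u1*v1+u2*v2+u3*v3)) + ((u1*v2+u2*v1+u3*v3) - (u1*v1+u2*v2+u3*v3)))"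
    unfolding r dvd_minus_iff by (rule dvd_add[OF dvd_mult[OF h1] h2])
  have pR2: "p dvd (((u1*v1+u2*v3+u3*v2) - (u1*v1+u2*v2+u3*v3)) + ((u1*v3+u2*v2+u3*v1) - (u1*v1+u2*v2+u3*v3)) + ((u1*v2+u2*v1+u3*v3) - (u1*v1+u2*v2+u3*v3)))^2"
    unfolding power2_eq_square by (rule dvd_mult[OF pR])
  have "p dvd (4*(u1*v1+u2*v2+u3*v3) - ((u1*v1+u2*v2+u3*v3)+(u1*v1+u2*v3+u3*v2)+(u1*v3+u2*v2+u3*v1)+(u1*v2+u2*v1+u3*v3)))^2
     + (4*(u1*v1+u2*v3+u3*v2) - ((u1*v1+u2*v2+u3*v3)+(u1*v1+u2*v3+u3*v2)+(u1*v3+u2*v2+u3*v1)+(u1*v2+u2*v1+u3*v3)))^2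
     + (4*(u1*v3+u2*v2+u3*v1) - ((u1*v1+u2*v2+u3*v3)+(u1*v1+u2*v3+u3*v2)+(u1*v3+u2*v2+u3*v1)+(u1*v2+u2*v1+u3*v3)))^2
     + (4*(u1*v2+u2*v1+u3*v3) - ((u1*v1+u2*v2+u3*v3)+(u1*v1+u2*v3+u3*v2)+(u1*v3+u2*v2+u3*v1)+(u1*v2+u2*v1+u3*v3)))^2"
    unfolding q1 by (rule dvd_diff[OF dvd_mult[OF pS] dvd_mult[OF pR2]])
  then have z: "[(4*(u1*v1+u2*v2+u3*v3) - ((u1*v1+u2*v2+u3*v3)+(u1*v1+u2*v3+u3*v2)+(u1*v3+u2*v2+u3*v1)+(u1*v2+u2*v1+u3*v3)))^2
     + (4*(u1*v1+u2*v3+u3*v2) - ((u1*v1+u2*v2+u3*v3)+(u1*v1+u2*v3+u3*v2)+(u1*v3+u2*v2+u3*v1)+(u1*v2+u2*v1+u3*v3)))^2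
     + (4*(u1*v3+u2*v2+u3*v1) - ((u1*v1+u2*v2+u3*v3)+(u1*v1+u2*v3+u3*v2)+(u1*v3+u2*v2+u3*v1)+(u1*v2+u2*v1+u3*v3)))^2
     + (4*(u1*v2+u2*v1+u3*v3) - ((u1*v1+u2*v2+u3*v3)+(u1*v1+u2*v3+u3*v2)+(u1*v3+u2*v2+u3*v1)+(u1*v2+u2*v1+u3*v3)))^2 = 0] (mod p)"
    by (simp only: cong_0_iff)
  have "[Qf 2 (S6 p u1 u2 u3 v1 v2 v3) = 0] (mod p)" by (rule cong_trans[OF q z])
  then have "[80*d^2 = 0] (mod p)" by (rule cong_trans[OF cong_sym[OF d(2)]])
  then have "p dvd 80 * d^2" by (simp add: cong_0_iff)
  moreover have "\<not> p dvd d^2" using d(1) pr prime_dvd_power by blast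
  ultimately show False using no80 pr p7 by blast
qed

lemma cong_by_lin:
  fixes p E T Du Dv c1 c2 :: int
  assumes "p dvd Du" "p dvd Dv" "E - T = c1*Du + c2*Dv"
  shows "[E = T] (mod p)"
  unfolding cong_iff_dvd_diff assms(3) using assms(1,2) by simp

lemma gen_Q2:
  fixes K m :: int
  shows "(4*(K+2*m) - ((K+2*m)+(K-m)+(K+m)+(K-2*m)))^2 + (4*(K-m) - ((K+2*m)+(K-m)+(K+m)+(K-2*m)))^2
    + (4*(K+m) - ((K+2*m)+(K-m)+(K+m)+(K-2*m)))^2 + (4*(K-2*m) - ((K+2*m)+(K-m)+(K+m)+(K-2*m)))^2 = 160*m^2"
  by algebra

lemma gen_Q4:
  fixes K m :: int
  shows "(4*(K+2*m) - ((K+2*m)+(K-m)+(K+m)+(K-2*m)))^4 + (4*(K-m) - ((K+2*m)+(K-m)+(K+m)+(K-2*m)))^4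
    + (4*(K+m) - ((K+2*m)+(K-m)+(K+m)+(K-2*m)))^4 + (4*(K-2*m) - ((K+2*m)+(K-m)+(K+m)+(K-2*m)))^4 = 8704*m^4"
  by algebra

lemma mid_nAP:
  fixes p u1 u2 u3 v1 v2 v3 :: int
  assumes pr: "prime p" and p7: "p > 7"
    and mu: "[2*u2 = u1+u3] (mod p)" and mv: "[2*v2 = v1+v3] (mod p)"
    and nu: "\<not> p dvd (u2 - u1)" and nv: "\<not> p dvd (v2 - v1)"
    and c4: "card (S6 p u1 u2 u3 v1 v2 v3) = 4"
  shows "\<not> is_AP_mod p (S6 p u1 u2 u3 v1 v2 v3)"
proof
  assume ap: "is_AP_mod p (S6 p u1 u2 u3 v1 v2 v3)"
  define K where "K = 3*u2*v2"
  define m where "m = (u2-u1)*(v2-v1)"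
  define Du where "Du = u3 - (2*u2 - u1)"
  define Dv where "Dv = v3 - (2*v2 - v1)"
  have pu: "p dvd Du"
  proof -
    have "p dvd (2*u2 - (u1+u3))" using mu by (simp add: cong_iff_dvd_diff)
    then have "p dvd - (2*u2 - (u1+u3))" by (simp only: dvd_minus_iff)
    moreover have "- (2*u2 - (u1+u3)) = Du" unfolding Du_def by simp
    ultimately show ?thesis by simp
  qed
  have pv: "p dvd Dv"
  proof -
    have "p dvd (2*v2 - (v1+v3))" using mv by (simp add: cong_iff_dvd_diff)
    then have "p dvd - (2*v2 - (v1+v3))" by (simp only: dvd_minus_iff)
    moreover have "- (2*v2 - (v1+v3)) = Dv" unfolding Dv_def by simp
    ultimately show ?thesis by simp
  qed
  have cA0: "[u1*v1+u2*v2+u3*v3 = K+2*m] (mod p)"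
    by (rule cong_by_lin[OF pu pv, of _ _ "2*v2 - v1" u3]) (unfold K_def m_def Du_def Dv_def, algebra)
  have cA1: "[u1*v2+u2*v3+u3*v1 = K-m] (mod p)"
    by (rule cong_by_lin[OF pu pv, of _ _ v1 u2]) (unfold K_def m_def Du_def Dv_def, algebra)
  have cA2: "[u1*v3+u2*v1+u3*v2 = K-m] (mod p)"
    by (rule cong_by_lin[OF pu pv, of _ _ v2 u1]) (unfold K_def m_def Du_def Dv_def, algebra)
  have cB0: "[u1*v1+u2*v3+u3*v2 = K+m] (mod p)"
    by (rule cong_by_lin[OF pu pv, of _ _ v2 u2]) (unfold K_def m_def Du_def Dv_def, algebra)
  have cB1: "[u1*v3+u2*v2+u3*v1 = K-2*m] (mod p)"
    by (rule cong_by_lin[OF pu pv, of _ _ v1 u1]) (unfold K_def m_def Du_def Dv_def, algebra)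
  have cB2: "[u1*v2+u2*v1+u3*v3 = K+m] (mod p)"
    by (rule cong_by_lin[OF pu pv, of _ _ "2*v2 - v1" u3]) (unfold K_def m_def Du_def Dv_def, algebra)
  have e1: "(u1*v3+u2*v1+u3*v2) mod p = (u1*v2+u2*v3+u3*v1) mod p"
    using cA1 cA2 unfolding cong_def by simp
  have e2: "(u1*v2+u2*v1+u3*v3) mod p = (u1*v1+u2*v3+u3*v2) mod p"
    using cB0 cB2 unfolding cong_def by simp
  have S: "S6 p u1 u2 u3 v1 v2 v3 = {(u1*v1+u2*v2+u3*v3) mod p, (u1*v2+u2*v3+u3*v1) mod p,
     (u1*v1+u2*v3+u3*v2) mod p, (u1*v3+u2*v2+u3*v1) mod p}"
    unfolding S6_def e1 e2 by auto
  have c: "card {(u1*v1+u2*v2+u3*v3) mod p, (u1*v2+u2*v3+u3*v1) mod p,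
     (u1*v1+u2*v3+u3*v2) mod p, (u1*v3+u2*v2+u3*v1) mod p} = 4" using c4 S by simp
  have q: "[Qf k (S6 p u1 u2 u3 v1 v2 v3) = (4*(K+2*m) - ((K+2*m)+(K-m)+(K+m)+(K-2*m)))^k + (4*(K-m) - ((K+2*m)+(K-m)+(K+m)+(K-2*m)))^k
    + (4*(K+m) - ((K+2*m)+(K-m)+(K+m)+(K-2*m)))^k + (4*(K-2*m) - ((K+2*m)+(K-m)+(K+m)+(K-2*m)))^k] (mod p)" for k
    unfolding S by (rule Qcong[OF c]) (simp_all add: cA0 cA1 cB0 cB1)
  have q2: "[Qf 2 (S6 p u1 u2 u3 v1 v2 v3) = 160*m^2] (mod p)" using q[of 2] unfolding gen_Q2 .
  have q4: "[Qf 4 (S6 p u1 u2 u3 v1 v2 v3) = 8704*m^4] (mod p)" using q[of 4] unfolding gen_Q4 .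
  obtain d where d: "\<not> p dvd d" "[Qf 2 (S6 p u1 u2 u3 v1 v2 v3) = 80*d^2] (mod p)"
      "[Qf 4 (S6 p u1 u2 u3 v1 v2 v3) = 2624*d^4] (mod p)"
    using AP_Q[OF ap c4] by blast
  have a2: "[80*d^2 = 160*m^2] (mod p)" by (rule cong_trans[OF cong_sym[OF d(2)] q2])
  have a4: "[2624*d^4 = 8704*m^4] (mod p)" by (rule cong_trans[OF cong_sym[OF d(3)] q4])
  have b2: "p dvd (80*d^2 - 160*m^2)" using a2 by (simp add: cong_iff_dvd_diff)
  have b4: "p dvd (2624*d^4 - 8704*m^4)" using a4 by (simp add: cong_iff_dvd_diff)
  have iden: "11468800 * m^4 = 6400*(2624*d^4 - 8704*m^4) - 2624*((80*d^2 - 160*m^2)*(80*d^2 + 160*m^2))"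
    by algebra
  have "p dvd 11468800 * m^4" unfolding iden
    by (rule dvd_diff[OF dvd_mult[OF b4] dvd_mult[OF dvd_mult2[OF b2]]])
  moreover have "\<not> p dvd m^4"
  proof
    assume "p dvd m^4"
    then have "p dvd m" using pr prime_dvd_power by blast
    then show False unfolding m_def using pr nu nv by (simp add: prime_dvd_mult_iff)
  qed
  ultimately show False using noBig pr p7 by blast
qed

lemma S6_v23: "S6 p u1 u2 u3 v1 v3 v2 = S6 p u1 u2 u3 v1 v2 v3"
  unfolding S6_def by auto

lemma S6_v12: "S6 p u1 u2 u3 v2 v1 v3 = S6 p u1 u2 u3 v1 v2 v3"
  unfolding S6_def by auto

lemma S6_u12: "S6 p u2 u1 u3 v1 v2 v3 = S6 p u1 u2 u3 v1 v2 v3"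
proof -
  have e: "u2*v1+u1*v2+u3*v3 = u1*v2+u2*v1+u3*v3" "u2*v2+u1*v3+u3*v1 = u1*v3+u2*v2+u3*v1"
    "u2*v3+u1*v1+u3*v2 = u1*v1+u2*v3+u3*v2" "u2*v1+u1*v3+u3*v2 = u1*v3+u2*v1+u3*v2"
    "u2*v3+u1*v2+u3*v1 = u1*v2+u2*v3+u3*v1" "u2*v2+u1*v1+u3*v3 = u1*v1+u2*v2+u3*v3"
    by simp_all
  show ?thesis unfolding S6_def e by auto
qed

lemma S6_u23: "S6 p u1 u3 u2 v1 v2 v3 = S6 p u1 u2 u3 v1 v2 v3"
proof -
  have e: "u1*v1+u3*v2+u2*v3 = u1*v1+u2*v3+u3*v2" "u1*v2+u3*v3+u2*v1 = u1*v2+u2*v1+u3*v3"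
    "u1*v3+u3*v1+u2*v2 = u1*v3+u2*v2+u3*v1" "u1*v1+u3*v3+u2*v2 = u1*v1+u2*v2+u3*v3"
    "u1*v3+u3*v2+u2*v1 = u1*v3+u2*v1+u3*v2" "u1*v2+u3*v1+u2*v3 = u1*v2+u2*v3+u3*v1"
    by simp_all
  show ?thesis unfolding S6_def e by auto
qed

lemma mid_nAP_v:
  fixes p u1 u2 u3 v1 v2 v3 :: int
  assumes pr: "prime p" and p7: "p > 7" and mu: "[2*u2 = u1+u3] (mod p)" and hv: "hasmid p v1 v2 v3"
    and gu: "good p u1 u2 u3" and gv: "good p v1 v2 v3"
    and c4: "card (S6 p u1 u2 u3 v1 v2 v3) = 4"
  shows "\<not> is_AP_mod p (S6 p u1 u2 u3 v1 v2 v3)"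
proof -
  have nu: "\<not> p dvd (u2 - u1)" using good_nz(2)[OF gu] .
  consider "[2*v1 = v2+v3] (mod p)" | "[2*v2 = v1+v3] (mod p)" | "[2*v3 = v1+v2] (mod p)"
    using hv unfolding hasmid_def by blast
  then show ?thesis
  proof cases
    case 1
    have "\<not> is_AP_mod p (S6 p u1 u2 u3 v2 v1 v3)"
      by (rule mid_nAP[OF pr p7 mu 1 nu good_nz(1)[OF gv]]) (simp add: S6_v12 c4)
    then show ?thesis by (simp add: S6_v12)
  next
    case 2
    show ?thesis by (rule mid_nAP[OF pr p7 mu 2 nu good_nz(2)[OF gv] c4])
  next
    case 3
    have "\<not> is_AP_mod p (S6 p u1 u2 u3 v1 v3 v2)"
      by (rule mid_nAP[OF pr p7 mu _ nu]) (use 3 good_nz(4)[OF gv] c4 in \<open>simp_all add: S6_v23 add.commute\<close>)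
    then show ?thesis by (simp add: S6_v23)
  qed
qed

lemma mid_nAP_all:
  fixes p u1 u2 u3 v1 v2 v3 :: int
  assumes pr: "prime p" and p7: "p > 7" and hu: "hasmid p u1 u2 u3" and hv: "hasmid p v1 v2 v3"
    and gu: "good p u1 u2 u3" and gv: "good p v1 v2 v3"
    and c4: "card (S6 p u1 u2 u3 v1 v2 v3) = 4"
  shows "\<not> is_AP_mod p (S6 p u1 u2 u3 v1 v2 v3)"
proof -
  consider "[2*u1 = u2+u3] (mod p)" | "[2*u2 = u1+u3] (mod p)" | "[2*u3 = u1+u2] (mod p)"
    using hu unfolding hasmid_def by blast
  then show ?thesis
  proof cases
    case 1
    have "\<not> is_AP_mod p (S6 p u2 u1 u3 v1 v2 v3)"
      by (rule mid_nAP_v[OF pr p7 1 hv good_perm(1)[OF gu] gv]) (simp add: S6_u12 c4)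
    then show ?thesis by (simp add: S6_u12)
  next
    case 2
    show ?thesis by (rule mid_nAP_v[OF pr p7 2 hv gu gv c4])
  next
    case 3
    have m: "[2*u3 = u1+u2] (mod p)" using 3 .
    have "\<not> is_AP_mod p (S6 p u1 u3 u2 v1 v2 v3)"
      by (rule mid_nAP_v[OF pr p7 m hv good_perm(2)[OF gu] gv]) (simp add: S6_u23 c4)
    then show ?thesis by (simp add: S6_u23)
  qed
qed

lemma ap3_mid:
  fixes p a b c :: int
  assumes g: "good p a b c" and m: "[2*b = a+c] (mod p)"
  shows "is_AP_mod p {a,b,c}"
proof -
  have r: "0 \<le> a" "a < p" "0 \<le> b" "b < p" "0 \<le> c" "c < p" "a \<noteq> b" "a \<noteq> c" "b \<noteq> c"
    using g unfolding good_def by auto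
  have c3: "card {a,b,c} = 3" using r by simp
  have l: "{..<3::nat} = {0,1,2}" by auto
  have "[a + 2*(b-a) = c] (mod p)"
  proof -
    have h: "p dvd (2*b - (a+c))" using m by (simp add: cong_iff_dvd_diff)
    have e: "a + 2*(b-a) - c = 2*b - (a+c)" by simp
    show ?thesis unfolding cong_iff_dvd_diff e by (rule h)
  qed
  then have e2: "(a + 2*(b-a)) mod p = c" using r by (simp add: cong_def)
  have "{(a + int i * (b-a)) mod p | i. i < card {a,b,c}} = (\<lambda>i. (a + int i * (b-a)) mod p) ` {..<3}"
    unfolding c3 by blast
  also have "\<dots> = {a mod p, (a + (b-a)) mod p, (a + 2*(b-a)) mod p}" unfolding l by simp
  also have "\<dots> = {a,b,c}" using r e2 by simp
  finally have S: "{a,b,c} = {(a + int i * (b-a)) mod p | i. i < card {a,b,c}}" by simp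
  have "(b - a) mod p \<noteq> 0" using nz[of b p a] r by (simp add: dvd_eq_mod_eq_0)
  then show ?thesis unfolding is_AP_mod_def using S by blast
qed

lemma hasmid_AP:
  fixes p a b c :: int
  assumes g: "good p a b c" and h: "hasmid p a b c"
  shows "is_AP_mod p {a,b,c}"
proof -
  consider "[2*a = b+c] (mod p)" | "[2*b = a+c] (mod p)" | "[2*c = a+b] (mod p)"
    using h unfolding hasmid_def by blast
  then show ?thesis
  proof cases
    case 1
    have "is_AP_mod p {b,a,c}" by (rule ap3_mid[OF good_perm(1)[OF g] 1])
    then show ?thesis by (simp add: insert_commute)
  next
    case 2
    show ?thesis by (rule ap3_mid[OF g 2])
  next
    case 3
    have "is_AP_mod p {a,c,b}" by (rule ap3_mid[OF good_perm(2)[OF g] 3])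
    then show ?thesis by (simp add: insert_commute)
  qed
qed

lemma neq_mod:
  fixes p x y A B :: int
  assumes "prime p" "\<not> p dvd x" "\<not> p dvd y" "A - B = x*y"
  shows "A mod p \<noteq> B mod p"
  unfolding modeq assms(4) using assms(1,2,3) by (simp add: prime_dvd_mult_iff)

lemma F1:
  fixes p u1 u2 u3 v1 v2 v3 :: int
  assumes pr: "prime p" and gu: "good p u1 u2 u3" and gv: "good p v1 v2 v3"
  shows "(u1*v1+u2*v2+u3*v3) mod p \<noteq> (u1*v1+u2*v3+u3*v2) mod p"
    "(u1*v1+u2*v2+u3*v3) mod p \<noteq> (u1*v3+u2*v2+u3*v1) mod p"
    "(u1*v1+u2*v2+u3*v3) mod p \<noteq> (u1*v2+u2*v1+u3*v3) mod p"
    "(u1*v2+u2*v3+u3*v1) mod p \<noteq> (u1*v1+u2*v3+u3*v2) mod p"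
    "(u1*v2+u2*v3+u3*v1) mod p \<noteq> (u1*v3+u2*v2+u3*v1) mod p"
    "(u1*v2+u2*v3+u3*v1) mod p \<noteq> (u1*v2+u2*v1+u3*v3) mod p"
    "(u1*v3+u2*v1+u3*v2) mod p \<noteq> (u1*v1+u2*v3+u3*v2) mod p"
    "(u1*v3+u2*v1+u3*v2) mod p \<noteq> (u1*v3+u2*v2+u3*v1) mod p"
    "(u1*v3+u2*v1+u3*v2) mod p \<noteq> (u1*v2+u2*v1+u3*v3) mod p"
proof -
  note nu = good_nz[OF gu] and nv = good_nz[OF gv]
  show "(u1*v1+u2*v2+u3*v3) mod p \<noteq> (u1*v1+u2*v3+u3*v2) mod p"
    by (rule neq_mod[OF pr nu(5) nv(5)]) algebra
  show "(u1*v1+u2*v2+u3*v3) mod p \<noteq> (u1*v3+u2*v2+u3*v1) mod p"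
    by (rule neq_mod[OF pr nu(3) nv(3)]) algebra
  show "(u1*v1+u2*v2+u3*v3) mod p \<noteq> (u1*v2+u2*v1+u3*v3) mod p"
    by (rule neq_mod[OF pr nu(1) nv(1)]) algebra
  show "(u1*v2+u2*v3+u3*v1) mod p \<noteq> (u1*v1+u2*v3+u3*v2) mod p"
    by (rule neq_mod[OF pr nu(3) nv(2)]) algebra
  show "(u1*v2+u2*v3+u3*v1) mod p \<noteq> (u1*v3+u2*v2+u3*v1) mod p"
    by (rule neq_mod[OF pr nu(1) nv(5)]) algebra
  show "(u1*v2+u2*v3+u3*v1) mod p \<noteq> (u1*v2+u2*v1+u3*v3) mod p"
    by (rule neq_mod[OF pr nu(5) nv(4)]) algebra
  show "(u1*v3+u2*v1+u3*v2) mod p \<noteq> (u1*v1+u2*v3+u3*v2) mod p"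
    by (rule neq_mod[OF pr nu(1) nv(4)]) algebra
  show "(u1*v3+u2*v1+u3*v2) mod p \<noteq> (u1*v3+u2*v2+u3*v1) mod p"
    by (rule neq_mod[OF pr nu(5) nv(1)]) algebra
  show "(u1*v3+u2*v1+u3*v2) mod p \<noteq> (u1*v2+u2*v1+u3*v3) mod p"
    by (rule neq_mod[OF pr nu(3) nv(6)]) algebra
qed

lemma card3:
  shows "card {a,b,c} = 1 \<longleftrightarrow> (a = b \<and> b = c)"
    "a \<noteq> b \<Longrightarrow> a \<noteq> c \<Longrightarrow> b \<noteq> c \<Longrightarrow> card {a,b,c} = 3"
    "card {a,b,c} \<ge> 1" "card {a,b,c} \<le> 3"
  by (auto simp: card_insert_if)

lemma main_int:
  fixes p u1 u2 u3 v1 v2 v3 :: int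
  assumes pr: "prime p" and p3: "p > 3" and gu: "good p u1 u2 u3" and gv: "good p v1 v2 v3"
  shows "card (S6 p u1 u2 u3 v1 v2 v3) \<ge> 4 \<and>
    ((p > 7 \<and> card (S6 p u1 u2 u3 v1 v2 v3) = 4) \<longrightarrow>
      \<not> is_AP_mod p (S6 p u1 u2 u3 v1 v2 v3) \<and>
      ((is_AP_mod p {u1, u2, u3} \<and> is_AP_mod p {v1, v2, v3}) \<or>
       (\<exists>\<alpha> \<beta> \<gamma> \<delta> x y.
          \<alpha> mod p \<noteq> 0 \<and> \<gamma> mod p \<noteq> 0 \<and>
          x \<in> residues_set p \<and> y \<in> residues_set p \<and> x \<noteq> y \<and>
          (x^2 - x + 1) mod p = 0 \<and> (y^2 - y + 1) mod p = 0 \<and>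
          affine_mod p \<alpha> \<beta> ` {u1, u2, u3} = {0, 1, x} \<and>
          affine_mod p \<gamma> \<delta> ` {v1, v2, v3} = {0, 1, y})))"
proof -
  let ?a0 = "(u1*v1+u2*v2+u3*v3)" and ?a1 = "(u1*v2+u2*v3+u3*v1)" and ?a2 = "(u1*v3+u2*v1+u3*v2)"
  let ?b0 = "(u1*v1+u2*v3+u3*v2)" and ?b1 = "(u1*v3+u2*v2+u3*v1)" and ?b2 = "(u1*v2+u2*v1+u3*v3)"
  let ?EA = "{?a0 mod p, ?a1 mod p, ?a2 mod p}" and ?EB = "{?b0 mod p, ?b1 mod p, ?b2 mod p}"
  let ?S = "S6 p u1 u2 u3 v1 v2 v3"
  have SU: "?S = ?EA \<union> ?EB" unfolding S6_def by auto
  have disj: "?EA \<inter> ?EB = {}" using F1[OF pr gu gv] by auto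
  have cS: "card ?S = card ?EA + card ?EB" unfolding SU by (rule card_Un_disjoint) (use disj in auto)
  have gv': "good p v1 v3 v2" using good_perm(2)[OF gv] .
  have allA_iff: "(?a0 mod p = ?a1 mod p \<and> ?a1 mod p = ?a2 mod p) \<longleftrightarrow> (p dvd (?a0 - ?a1) \<and> p dvd (?a1 - ?a2))"
    by (simp only: modeq)
  have allB_iff: "(?b0 mod p = ?b1 mod p \<and> ?b1 mod p = ?b2 mod p) \<longleftrightarrow> (p dvd (?b0 - ?b1) \<and> p dvd (?b1 - ?b2))"
    by (simp only: modeq)
  have cEA1: "card ?EA = 1 \<longleftrightarrow> (?a0 mod p = ?a1 mod p \<and> ?a1 mod p = ?a2 mod p)"
    by (rule card3(1))
  have cEB1: "card ?EB = 1 \<longleftrightarrow> (?b0 mod p = ?b1 mod p \<and> ?b1 mod p = ?b2 mod p)"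
    by (rule card3(1))
  have dA: "p dvd (?a0 - ?a2) \<longleftrightarrow> p dvd (?a2 - ?a0)" by (rule dvd_diff_commute)
  have dB: "p dvd (?b0 - ?b2) \<longleftrightarrow> p dvd (?b2 - ?b0)" by (rule dvd_diff_commute)
  have A1B3: "card ?EB = 3" if "card ?EA = 1"
  proof -
    have h: "p dvd (?a0 - ?a1)" "p dvd (?a1 - ?a2)" using that allA_iff cEA1 by blast+
    have "\<not> (p dvd (?b0 - ?b1) \<or> p dvd (?b1 - ?b2) \<or> p dvd (?b2 - ?b0))"
      by (rule allA_Bdist[OF pr p3 gu gv h])
    then have "?b0 mod p \<noteq> ?b1 mod p" "?b0 mod p \<noteq> ?b2 mod p" "?b1 mod p \<noteq> ?b2 mod p"
      unfolding modeq using dB by blast+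
    then show ?thesis by (rule card3(2))
  qed
  have B1A3: "card ?EA = 3" if "card ?EB = 1"
  proof -
    have h: "p dvd (?b0 - ?b1)" "p dvd (?b1 - ?b2)" using that allB_iff cEB1 by blast+
    have "\<not> (p dvd (?a0 - ?a1) \<or> p dvd (?a1 - ?a2) \<or> p dvd (?a2 - ?a0))"
      by (rule allA_Bdist[OF pr p3 gu gv' h])
    then have "?a0 mod p \<noteq> ?a1 mod p" "?a0 mod p \<noteq> ?a2 mod p" "?a1 mod p \<noteq> ?a2 mod p"
      unfolding modeq using dA by blast+
    then show ?thesis by (rule card3(2))
  qed
  have cA: "card ?EA \<ge> 1" "card ?EA \<le> 3" by (rule card3(3), rule card3(4))
  have cB: "card ?EB \<ge> 1" "card ?EB \<le> 3" by (rule card3(3), rule card3(4))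
  have part1: "card ?S \<ge> 4"
  proof (cases "card ?EA = 1")
    case True then show ?thesis using A1B3 cS by simp
  next
    case False
    show ?thesis
    proof (cases "card ?EB = 1")
      case True then show ?thesis using B1A3 cS by simp
    next
      case False
      then show ?thesis using \<open>card ?EA \<noteq> 1\<close> cS cA cB by linarith
    qed
  qed
  have part2: "\<not> is_AP_mod p ?S \<and>
      ((is_AP_mod p {u1, u2, u3} \<and> is_AP_mod p {v1, v2, v3}) \<or>
       (\<exists>\<alpha> \<beta> \<gamma> \<delta> x y.
          \<alpha> mod p \<noteq> 0 \<and> \<gamma> mod p \<noteq> 0 \<and>
          x \<in> residues_set p \<and> y \<in> residues_set p \<and> x \<noteq> y \<and>
          (x^2 - x + 1) mod p = 0 \<and> (y^2 - y + 1) mod p = 0 \<and>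
          affine_mod p \<alpha> \<beta> ` {u1, u2, u3} = {0, 1, x} \<and>
          affine_mod p \<gamma> \<delta> ` {v1, v2, v3} = {0, 1, y}))"
    if p7: "p > 7" and c4: "card ?S = 4"
  proof -
    consider "card ?EA = 1" | "card ?EB = 1" | "card ?EA = 2" "card ?EB = 2"
      using cS c4 cA cB by linarith
    then show ?thesis
    proof cases
      case 1
      have h: "p dvd (?a0 - ?a1)" "p dvd (?a1 - ?a2)" using 1 allA_iff cEA1 by blast+
      have n: "\<not> is_AP_mod p ?S" by (rule allA_nAP[OF pr p7 gu gv h c4])
      show ?thesis using n allA_aff[OF pr p3 gu gv h] by blast
    next
      case 2
      have h: "p dvd (?b0 - ?b1)" "p dvd (?b1 - ?b2)" using 2 allB_iff cEB1 by blast+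
      have c4': "card (S6 p u1 u2 u3 v1 v3 v2) = 4" using c4 by (simp add: S6_v23)
      have n: "\<not> is_AP_mod p ?S" using allA_nAP[OF pr p7 gu gv' h c4'] by (simp add: S6_v23)
      have e: "{v1, v3, v2} = {v1, v2, v3}" by auto
      show ?thesis using n allA_aff[OF pr p3 gu gv' h] unfolding e by blast
    next
      case 3
      have hX: "p dvd (?a0 - ?a1) \<or> p dvd (?a1 - ?a2) \<or> p dvd (?a2 - ?a0)"
      proof (rule ccontr)
        assume "\<not> ?thesis"
        then have "?a0 mod p \<noteq> ?a1 mod p" "?a0 mod p \<noteq> ?a2 mod p" "?a1 mod p \<noteq> ?a2 mod p"
          unfolding modeq using dA by blast+
        then have "card ?EA = 3" by (rule card3(2))
        then show False using 3 by simp
      qed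
      have hY: "p dvd (?b0 - ?b1) \<or> p dvd (?b1 - ?b2) \<or> p dvd (?b2 - ?b0)"
      proof (rule ccontr)
        assume "\<not> ?thesis"
        then have "?b0 mod p \<noteq> ?b1 mod p" "?b0 mod p \<noteq> ?b2 mod p" "?b1 mod p \<noteq> ?b2 mod p"
          unfolding modeq using dB by blast+
        then have "card ?EB = 3" by (rule card3(2))
        then show False using 3 by simp
      qed
      have hm: "hasmid p u1 u2 u3 \<and> hasmid p v1 v2 v3"
        by (rule F3[OF pr good_nz(1,3,5)[OF gu] good_nz(1,4,5)[OF gv] hX hY])
      have n: "\<not> is_AP_mod p ?S" using mid_nAP_all[OF pr p7 _ _ gu gv c4] hm by blast
      show ?thesis using n hasmid_AP[OF gu] hasmid_AP[OF gv] hm by blast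
    qed
  qed
  show ?thesis using part1 part2 by blast
qed

lemma perm3:
  fixes a b c :: nat
  assumes "a \<in> {1,2,3}" "b \<in> {1,2,3}" "c \<in> {1,2,3}" "a \<noteq> b" "a \<noteq> c" "b \<noteq> c"
  shows "(\<lambda>i. if i = 1 then a else if i = 2 then b else if i = 3 then c else i) permutes {1,2,3::nat}"
proof (rule bij_imp_permutes)
  show "bij_betw (\<lambda>i. if i = 1 then a else if i = 2 then b else if i = 3 then c else i) {1,2,3} {1,2,3}"
    unfolding bij_betw_def inj_on_def using assms by auto
qed auto

lemma seq_prod_explicit:
  "seq_prod_set p u v = {(u 1*v 1+u 2*v 2+u 3*v 3) mod p, (u 1*v 2+u 2*v 3+u 3*v 1) mod p,
     (u 1*v 3+u 2*v 1+u 3*v 2) mod p, (u 1*v 1+u 2*v 3+u 3*v 2) mod p,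
     (u 1*v 3+u 2*v 2+u 3*v 1) mod p, (u 1*v 2+u 2*v 1+u 3*v 3) mod p}"
  (is "_ = ?R")
proof
  show "seq_prod_set p u v \<subseteq> ?R"
  proof
    fix z assume "z \<in> seq_prod_set p u v"
    then obtain \<sigma> where s: "\<sigma> permutes {1,2,3::nat}"
      and z: "z = (\<Sum>i\<in>{1,2,3}. u i * v (\<sigma> i)) mod p"
      unfolding seq_prod_set_def by blast
    have z2: "z = (u 1 * v (\<sigma> 1) + u 2 * v (\<sigma> 2) + u 3 * v (\<sigma> 3)) mod p"
      using z by (simp add: add.assoc)
    have m: "\<sigma> 1 \<in> {1,2,3}" "\<sigma> 2 \<in> {1,2,3}" "\<sigma> 3 \<in> {1,2,3}"
      using permutes_in_image[OF s] by auto
    have d: "\<sigma> 1 \<noteq> \<sigma> 2" "\<sigma> 1 \<noteq> \<sigma> 3" "\<sigma> 2 \<noteq> \<sigma> 3"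
      using permutes_inj[OF s] by (metis injD numeral_One numeral_eq_iff semiring_norm(84,85,86,89) one_neq_zero)+
    show "z \<in> ?R" using m d unfolding z2 by auto
  qed
next
  have key: "(u 1 * v a + u 2 * v b + u 3 * v c) mod p \<in> seq_prod_set p u v"
    if "a \<in> {1,2,3}" "b \<in> {1,2,3}" "c \<in> {1,2,3}" "a \<noteq> b" "a \<noteq> c" "b \<noteq> c" for a b c :: nat
  proof -
    let ?s = "\<lambda>i. if i = 1 then a else if i = 2 then b else if i = 3 then c else i"
    have P: "?s permutes {1,2,3}" using perm3[OF that] .
    have "(\<Sum>i\<in>{1,2,3::nat}. u i * v (?s i)) = u 1 * v a + u 2 * v b + u 3 * v c"
      by (simp add: add.assoc)
    then have E: "(u 1 * v a + u 2 * v b + u 3 * v c) mod p = (\<Sum>i\<in>{1,2,3::nat}. u i * v (?s i)) mod p" by (simp add: add.assoc)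
    show ?thesis unfolding seq_prod_set_def
      apply (rule CollectI)
      apply (rule exI[where x="?s"])
      using E P by blast
  qed
  show "?R \<subseteq> seq_prod_set p u v"
    apply (intro insert_subsetI empty_subsetI)
    apply (rule key; simp)+
    done
qed


theorem lemma2p5:
  fixes p :: int and u v :: "nat \<Rightarrow> int"
  assumes "prime p" and "p > 3"
    and "\<forall>i\<in>{1,2,3}. u i \<in> residues_set p" and "\<forall>i\<in>{1,2,3}. v i \<in> residues_set p"
    and "u 1 \<noteq> u 2" "u 1 \<noteq> u 3" "u 2 \<noteq> u 3"
    and "v 1 \<noteq> v 2" "v 1 \<noteq> v 3" "v 2 \<noteq> v 3"
  shows "card (seq_prod_set p u v) \<ge> 4 \<and>
    ((p > 7 \<and> card (seq_prod_set p u v) = 4) \<longrightarrow>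
      \<not> is_AP_mod p (seq_prod_set p u v) \<and>
      ((is_AP_mod p {u 1, u 2, u 3} \<and> is_AP_mod p {v 1, v 2, v 3}) \<or>
       (\<exists>\<alpha> \<beta> \<gamma> \<delta> x y.
          \<alpha> mod p \<noteq> 0 \<and> \<gamma> mod p \<noteq> 0 \<and>
          x \<in> residues_set p \<and> y \<in> residues_set p \<and> x \<noteq> y \<and>
          (x^2 - x + 1) mod p = 0 \<and> (y^2 - y + 1) mod p = 0 \<and>
          affine_mod p \<alpha> \<beta> ` {u 1, u 2, u 3} = {0, 1, x} \<and>
          affine_mod p \<gamma> \<delta> ` {v 1, v 2, v 3} = {0, 1, y})))"
proof -
  have gu: "good p (u 1) (u 2) (u 3)"
    using assms(3,5,6,7) unfolding good_def residues_set_def by auto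
  have gv: "good p (v 1) (v 2) (v 3)"
    using assms(4,8,9,10) unfolding good_def residues_set_def by auto
  have S: "seq_prod_set p u v = S6 p (u 1) (u 2) (u 3) (v 1) (v 2) (v 3)"
    unfolding S6_def by (rule seq_prod_explicit)
  show ?thesis unfolding S by (rule main_int[OF assms(1,2) gu gv])
qed

end
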